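(* For every temporal graph with static graph $G=(V,E)$, lifetime $T_{\max}$ and every $\delta\in\mathbb N^+$, the Follow algorithm (described in the context) terminates after at most $6|E| + \lceil T_{\max}/\delta\rceil$ rounds.
   Context: A temporal graph $\mathcal G=(V,E,\lambda)$ with lifetime $T_{\max}$ consists of a finite undirected static graph $(V,E)$ and a labeling $\lambda:E\to\{1,\dots,T_{\max}\}$; edge $e$ is present only at time $\lambda(e)$. Infection model with parameter $\delta\in\mathbb N^+$: a seed $(u,t)$ makes $u$ infected at time $t$; otherwise a susceptible node $u$ becomes infected at time $t$ iff some neighbour $v$ infectious at time $t$ has $\lambda(uv)=t$ (exactly one infector recorded if several exist). A node infected at time $t$ is infectious at times $t+1,\dots,t+\delta$ and resistant afterwards. Each round, the Discoverer submits seed infections and observes an infection log (triples $(u,v,t)$: $u$ infected $v$ at time $t$). Subroutine Explore$(u,t)$: for each $t'\in\{t-\delta-1,t-1,t\}$, if no round with seed $(u,t')$ was performed, perform a round with the single seed $(u,t')$ and record it; then for each newly observed successful infection along an edge $uv$ at time $t''$, call Explore$(v,t'')$. Algorithm Follow: pick any node $v_0$; for each $i\in[0,\lceil T_{\max}/\delta\rceil]$ perform a round with single seed $(v_0,i\delta)$; for each edge $e=v_0u$ along which an infection succeeds, call Explore$(u,\lambda(e))$. *)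

theory Defs
  imports Main "HOL-Library.Library"
begin

definition temporal_graph :: "'v set \<Rightarrow> 'v set set \<Rightarrow> ('v set \<Rightarrow> nat) \<Rightarrow> nat \<Rightarrow> bool" where
  "temporal_graph V E lam Tmax \<longleftrightarrow>
     finite V \<and>
     (\<forall>e\<in>E. \<exists>a b. a \<noteq> b \<and> a \<in> V \<and> b \<in> V \<and> e = {a, b}) \<and>
     (\<forall>e\<in>E. 1 \<le> lam e \<and> lam e \<le> Tmax)"

definition infectious :: "nat \<Rightarrow> int option \<Rightarrow> int \<Rightarrow> bool" where
  "infectious \<delta> st t \<longleftrightarrow> (\<exists>s. st = Some s \<and> s + 1 \<le> t \<and> t \<le> s + int \<delta>)"

text \<open>State (infection times) after processing times t0, t0+1, ..., t0+k,
  for the single seed (u, t0).\<close>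
fun inf_state :: "'v set set \<Rightarrow> ('v set \<Rightarrow> nat) \<Rightarrow> nat \<Rightarrow> 'v \<Rightarrow> int \<Rightarrow> nat \<Rightarrow> ('v \<Rightarrow> int option)" where
  "inf_state E lam \<delta> u t0 0 = (\<lambda>w. if w = u then Some t0 else None)"
| "inf_state E lam \<delta> u t0 (Suc k) =
     (let S = inf_state E lam \<delta> u t0 k; t = t0 + int (Suc k) in
      (\<lambda>w. if S w \<noteq> None then S w
           else if (\<exists>v. {v, w} \<in> E \<and> int (lam {v, w}) = t \<and> infectious \<delta> (S v) t)
           then Some t else None))"

text \<open>Final infection times (no edge exists after time Tmax).\<close>
definition inf_time :: "'v set set \<Rightarrow> ('v set \<Rightarrow> nat) \<Rightarrow> nat \<Rightarrow> nat \<Rightarrow> 'v \<Rightarrow> int \<Rightarrow> ('v \<Rightarrow> int option)" where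
  "inf_time E lam Tmax \<delta> u t0 = inf_state E lam \<delta> u t0 (nat (int Tmax - t0))"

text \<open>A valid infection log of the round with single seed (u,t0): a set of triples
  (x, w, s) meaning x infected w at time s; every non-seed infected node has exactly one
  recorded infector, which is an infectious neighbour along an edge with label s.
  (The choice among several possible infectors is arbitrary.)\<close>
definition valid_log :: "'v set set \<Rightarrow> ('v set \<Rightarrow> nat) \<Rightarrow> nat \<Rightarrow> nat \<Rightarrow> 'v \<times> int \<Rightarrow> ('v \<times> 'v \<times> int) set \<Rightarrow> bool" where
  "valid_log E lam Tmax \<delta> seed L \<longleftrightarrow>
     (let u = fst seed; F = inf_time E lam Tmax \<delta> (fst seed) (snd seed) in
       (\<forall>x w s. (x, w, s) \<in> L \<longrightarrow>
          w \<noteq> u \<and> F w = Some s \<and> {x, w} \<in> E \<and> int (lam {x, w}) = s \<and> infectious \<delta> (F x) s) \<and>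
       (\<forall>w s. w \<noteq> u \<and> F w = Some s \<longrightarrow> (\<exists>!x. (x, w, s) \<in> L)))"

text \<open>Execution state: set of seeds (node, time) of the rounds performed so far, and the
  stack of pending Explore calls (depth-first recursion). The log of the round with seed
  (u,t) is Lg (u,t); since no seed is used twice this models an arbitrary (adversarial)
  choice of recorded infectors. One step executes the head call Explore(u,t): it performs
  the rounds with seeds (u,t') for t' in {t-delta-1, t-1, t} not performed before, and then
  calls Explore(v,t'') for each infection (u,v,t'') observed in these new rounds, in an
  arbitrary order, before returning to the remaining pending calls.\<close>

definition explore_new :: "nat \<Rightarrow> ('v \<times> int) set \<Rightarrow> 'v \<Rightarrow> int \<Rightarrow> int set" where
  "explore_new \<delta> P u t = {t'. t' \<in> {t - int \<delta> - 1, t - 1, t} \<and> (u, t') \<notin> P}"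

inductive follow_step :: "nat \<Rightarrow> ('v \<times> int \<Rightarrow> ('v \<times> 'v \<times> int) set) \<Rightarrow>
    ('v \<times> int) set \<times> ('v \<times> int) list \<Rightarrow> ('v \<times> int) set \<times> ('v \<times> int) list \<Rightarrow> bool"
  for \<delta> Lg where
  "distinct cs \<Longrightarrow>
   set cs = {(v, s). \<exists>t'\<in>explore_new \<delta> P u t. (u, v, s) \<in> Lg (u, t')} \<Longrightarrow>
   follow_step \<delta> Lg (P, (u, t) # rest)
     (P \<union> {(u, t') | t'. t' \<in> explore_new \<delta> P u t}, cs @ rest)"

definition follow_init_rounds :: "nat \<Rightarrow> nat \<Rightarrow> 'v \<Rightarrow> ('v \<times> int) set" where
  "follow_init_rounds Tmax \<delta> v0 =
     {(v0, int i * int \<delta>) | i. i < nat \<lceil>real Tmax / real \<delta>\<rceil>}"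

definition follow_init_calls :: "nat \<Rightarrow> nat \<Rightarrow> ('v \<times> int \<Rightarrow> ('v \<times> 'v \<times> int) set) \<Rightarrow> 'v \<Rightarrow> ('v \<times> int) set" where
  "follow_init_calls Tmax \<delta> Lg v0 =
     {(w, s). \<exists>r\<in>follow_init_rounds Tmax \<delta> v0. (v0, w, s) \<in> Lg r}"

end

theory Submission
  imports Defs
begin

lemma step_props:
  assumes "follow_step \<delta> Lg (P, stk) (P', stk')"
  shows "\<exists>u t rest cs. stk = (u,t)#rest \<and> stk' = cs @ rest \<and> distinct cs \<and>
     set cs = {(v, s). \<exists>t'\<in>explore_new \<delta> P u t. (u, v, s) \<in> Lg (u, t')} \<and>
     P' = P \<union> {(u, t') | t'. t' \<in> explore_new \<delta> P u t}"
  using assms by (cases rule: follow_step.cases) auto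

theorem mainTheorem7:
  fixes V :: "'v set" and E :: "'v set set" and lam :: "'v set \<Rightarrow> nat"
    and Tmax \<delta> :: nat and v0 :: 'v
    and Lg :: "'v \<times> int \<Rightarrow> ('v \<times> 'v \<times> int) set"
    and cs0 :: "('v \<times> int) list"
  assumes "temporal_graph V E lam Tmax"
    and "\<delta> > 0"
    and "v0 \<in> V"
    and "\<And>seed. valid_log E lam Tmax \<delta> seed (Lg seed)"
    and "distinct cs0"
    and "set cs0 = follow_init_calls Tmax \<delta> Lg v0"
  shows "(\<nexists>f. f 0 = (follow_init_rounds Tmax \<delta> v0, cs0) \<and>
              (\<forall>n. follow_step \<delta> Lg (f n) (f (Suc n))))
    \<and> (\<forall>st. (follow_step \<delta> Lg)\<^sup>*\<^sup>* (follow_init_rounds Tmax \<delta> v0, cs0) st \<longrightarrow>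
           snd st \<noteq> [] \<longrightarrow> (\<exists>st'. follow_step \<delta> Lg st st'))
    \<and> (\<forall>st. (follow_step \<delta> Lg)\<^sup>*\<^sup>* (follow_init_rounds Tmax \<delta> v0, cs0) st \<longrightarrow>
           finite (fst st) \<and>
           card (fst st) \<le> 6 * card E + nat \<lceil>real Tmax / real \<delta>\<rceil>)"
proof -
  have logE: "{x,w} \<in> E \<and> int (lam {x,w}) = s" if "(x,w,s) \<in> Lg seed" for x w s seed
    using assms(4)[of seed] that unfolding valid_log_def Let_def by blast
  have tg: "finite V" "\<forall>e\<in>E. \<exists>a b. a \<noteq> b \<and> a \<in> V \<and> b \<in> V \<and> e = {a, b}"
    using assms(1) unfolding temporal_graph_def by simp_all
  have finE: "finite E"
  proof -
    have "E \<subseteq> Pow V"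
    proof
      fix e assume "e \<in> E"
      then obtain a b where "a \<in> V" "b \<in> V" "e = {a, b}" using tg(2) by blast
      then show "e \<in> Pow V" by simp
    qed
    then show ?thesis using tg(1) by (meson finite_Pow_iff finite_subset)
  qed
  define N where "N = nat \<lceil>real Tmax / real \<delta>\<rceil>"
  define I where "I = follow_init_rounds Tmax \<delta> v0"
  define C where "C = (\<Union>e\<in>E. (\<lambda>w. (w, int (lam e))) ` e)"
  define R where "R = (\<lambda>(u::'v, t::int). {(u, t - int \<delta> - 1), (u, t - 1), (u, t)})"
  define U where "U = I \<union> (\<Union>c\<in>C. R c)"
  have finI: "finite I" and cardI: "card I \<le> N"
  proof -
    have "I = (\<lambda>i. (v0, int i * int \<delta>)) ` {..<N}"
      unfolding I_def follow_init_rounds_def N_def by auto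
    then show "finite I" "card I \<le> N" using card_image_le[of "{..<N}" "\<lambda>i. (v0, int i * int \<delta>)"] by simp_all
  qed
  have fin_e: "finite e \<and> card e \<le> 2" if "e \<in> E" for e
  proof -
    have "\<exists>a b. a \<noteq> b \<and> a \<in> V \<and> b \<in> V \<and> e = {a, b}" using tg(2) that by (rule bspec)
    then obtain a b where "e = {a,b}" by blast
    then show ?thesis by (simp add: card_insert_le_m1)
  qed
  have finC: "finite C" unfolding C_def
    by (intro finite_UN_I finE finite_imageI) (simp add: fin_e)
  have cardC: "card C \<le> 2 * card E"
  proof -
    have "card C \<le> (\<Sum>e\<in>E. card ((\<lambda>w. (w, int (lam e))) ` e))"
      unfolding C_def by (rule card_UN_le[OF finE])
    also have "\<dots> \<le> (\<Sum>e\<in>E. 2)"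
      by (rule sum_mono) (meson card_image_le fin_e order_trans)
    finally show ?thesis by simp
  qed
  have finR: "finite (R c)" "card (R c) \<le> 3" for c
    unfolding R_def by (auto simp: card_insert_le_m1 split: prod.splits)
  have finU: "finite U" unfolding U_def using finI finC finR by auto
  have cardU: "card U \<le> 6 * card E + N"
  proof -
    have "card U \<le> card I + card (\<Union>c\<in>C. R c)"
      unfolding U_def by (rule card_Un_le)
    also have "card (\<Union>c\<in>C. R c) \<le> (\<Sum>c\<in>C. card (R c))"
      by (rule card_UN_le[OF finC])
    also have "\<dots> \<le> (\<Sum>c\<in>C. 3)" by (rule sum_mono) (rule finR(2))
    finally show ?thesis using cardI cardC by simp
  qed
  define inv where "inv = (\<lambda>st::('v \<times> int) set \<times> ('v \<times> int) list. fst st \<subseteq> U \<and> set (snd st) \<subseteq> C)"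
  have callsC: "{(v, s). \<exists>t'\<in>X. (u, v, s) \<in> Lg (u, t')} \<subseteq> C" for u X
    unfolding C_def using logE by fastforce
  have inv0: "inv (I, cs0)"
  proof -
    have "follow_init_calls Tmax \<delta> Lg v0 \<subseteq> C"
      unfolding follow_init_calls_def C_def using logE by fastforce
    then show ?thesis unfolding inv_def U_def using assms(6) by auto
  qed
  have step_inv: "inv st'" if H: "inv st" "follow_step \<delta> Lg st st'" for st st'
  proof -
    obtain P stk P' stk' where e: "st = (P, stk)" "st' = (P', stk')" by (cases st, cases st')
    obtain u t rest cs where h: "stk = (u,t)#rest" "stk' = cs @ rest" "distinct cs"
      "set cs = {(v, s). \<exists>t'\<in>explore_new \<delta> P u t. (u, v, s) \<in> Lg (u, t')}"
      "P' = P \<union> {(u, t') | t'. t' \<in> explore_new \<delta> P u t}"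
      using step_props[of \<delta> Lg P stk P' stk'] H(2) e by blast
    have utC: "(u,t) \<in> C" using H(1) e h(1) unfolding inv_def by auto
    have "{(u, t') | t'. t' \<in> explore_new \<delta> P u t} \<subseteq> R (u,t)"
      unfolding R_def explore_new_def by auto
    also have "\<dots> \<subseteq> U" unfolding U_def using utC by auto
    finally show ?thesis using H(1) e h callsC[where u=u and X="explore_new \<delta> P u t"]
      unfolding inv_def by auto
  qed
  have reach_inv: "inv st" if "(follow_step \<delta> Lg)\<^sup>*\<^sup>* (I, cs0) st" for st
    using that by (induction rule: rtranclp_induct) (auto intro: inv0 step_inv)
  define mu where "mu = (\<lambda>st::('v \<times> int) set \<times> ('v \<times> int) list.
      (card U - card (fst st)) * (card C + 1) + length (snd st))"
  have decr: "mu st' < mu st" if H: "inv st" "follow_step \<delta> Lg st st'" for st st'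
  proof -
    obtain P stk P' stk' where e: "st = (P, stk)" "st' = (P', stk')" by (cases st, cases st')
    obtain u t rest cs where h: "stk = (u,t)#rest" "stk' = cs @ rest" "distinct cs"
      "set cs = {(v, s). \<exists>t'\<in>explore_new \<delta> P u t. (u, v, s) \<in> Lg (u, t')}"
      "P' = P \<union> {(u, t') | t'. t' \<in> explore_new \<delta> P u t}"
      using step_props[of \<delta> Lg P stk P' stk'] H(2) e by blast
    have inv': "inv st'" using step_inv H by blast
    show ?thesis
    proof (cases "explore_new \<delta> P u t = {}")
      case True
      then show ?thesis using h e unfolding mu_def by simp
    next
      case False
      then obtain t' where t': "t' \<in> explore_new \<delta> P u t" by blast
      then have "(u,t') \<notin> P" unfolding explore_new_def by auto
      then have psub: "P \<subset> P'" using h(5) t' by auto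
      have P'U: "P' \<subseteq> U" using inv' e unfolding inv_def by auto
      have c1: "card P < card P'" using psub P'U finU
        by (meson finite_subset psubset_card_mono)
      have c2: "card P' \<le> card U" using P'U finU card_mono by blast
      have lcs: "length cs \<le> card C"
        using h(3,4) callsC[where u=u and X="explore_new \<delta> P u t"] finC
        by (metis card_mono distinct_card)
      define a where "a = card U - card P'"
      define b where "b = card U - card P"
      have ab: "b \<ge> a + 1" unfolding a_def b_def using c1 c2 by simp
      have "b * (card C + 1) \<ge> (a + 1) * (card C + 1)" using ab by (rule mult_right_mono) simp
      then have "a * (card C + 1) + length cs + length rest < b * (card C + 1) + 1 + length rest"
        using lcs by (simp add: algebra_simps)
      then show ?thesis unfolding mu_def e a_def b_def h by simp
    qed
  qed
  have part1: "\<nexists>f. f 0 = (I, cs0) \<and> (\<forall>n. follow_step \<delta> Lg (f n) (f (Suc n)))"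
  proof
    assume "\<exists>f. f 0 = (I, cs0) \<and> (\<forall>n. follow_step \<delta> Lg (f n) (f (Suc n)))"
    then obtain f where f0: "f 0 = (I, cs0)" and fs: "\<And>n. follow_step \<delta> Lg (f n) (f (Suc n))"
      by blast
    have reach: "(follow_step \<delta> Lg)\<^sup>*\<^sup>* (I, cs0) (f n)" for n
    proof (induction n)
      case 0 then show ?case using f0 by simp
    next
      case (Suc n) then show ?case using fs[of n] by (meson rtranclp.rtrancl_into_rtrancl)
    qed
    have "mu (f n) + n \<le> mu (f 0)" for n
    proof (induction n)
      case 0 then show ?case by simp
    next
      case (Suc n)
      have "mu (f (Suc n)) < mu (f n)" using decr reach_inv[OF reach[of n]] fs[of n] by blast
      then show ?case using Suc by simp
    qed
    from this[of "Suc (mu (f 0))"] show False by simp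
  qed
  have part2: "\<forall>st. (follow_step \<delta> Lg)\<^sup>*\<^sup>* (I, cs0) st \<longrightarrow>
           snd st \<noteq> [] \<longrightarrow> (\<exists>st'. follow_step \<delta> Lg st st')"
  proof (intro allI impI)
    fix st assume "(follow_step \<delta> Lg)\<^sup>*\<^sup>* (I, cs0) st" "snd st \<noteq> []"
    then obtain P u t rest where e: "st = (P, (u,t)#rest)"
      by (metis list.exhaust prod.collapse)
    define S where "S = {(v, s). \<exists>t'\<in>explore_new \<delta> P u t. (u, v, s) \<in> Lg (u, t')}"
    have "finite S" unfolding S_def using callsC finC finite_subset by blast
    then obtain cs where "distinct cs" "set cs = S" using finite_distinct_list by blast
    then have "follow_step \<delta> Lg (P, (u, t) # rest)
       (P \<union> {(u, t') | t'. t' \<in> explore_new \<delta> P u t}, cs @ rest)"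
      unfolding S_def by (rule follow_step.intros)
    then show "\<exists>st'. follow_step \<delta> Lg st st'" using e by blast
  qed
  have part3: "\<forall>st. (follow_step \<delta> Lg)\<^sup>*\<^sup>* (I, cs0) st \<longrightarrow>
           finite (fst st) \<and> card (fst st) \<le> 6 * card E + N"
  proof (intro allI impI)
    fix st assume "(follow_step \<delta> Lg)\<^sup>*\<^sup>* (I, cs0) st"
    then have "fst st \<subseteq> U" using reach_inv unfolding inv_def by blast
    then show "finite (fst st) \<and> card (fst st) \<le> 6 * card E + N"
      using finU cardU by (meson card_mono finite_subset order_trans)
  qed
  show ?thesis using part1 part2 part3 unfolding I_def N_def by blast
qed

end
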